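(* Fix an integer $N\ge1$ and let $\lambda_n=8^n$ for $n\ge1$. Let $(m_n(t))_{n\ge1,t\ge0}$ be the solution of $$\frac{d}{dt}m_n(t)=-\lambda_nm_n(t)m_{n+1}(t),\quad n=1,2,\dots,$$ with $m_n(0)=2^{-n}$ for $n=1,\dots,2N$ and $m_n(0)=0$ for $n>2N$. Then for all $t\ge0$, $$m_{2n}(t)\ge\tfrac12m_{2n}(0)\quad(n\ge1),\qquad m_{2n+1}(t)\le m_{2n+1}(0)\exp\{-4^{2n}t\}\quad(n\ge0).$$
   Context: Since $m_n(0)=0$ for $n>2N$, one has $m_n\equiv0$ for $n>2N$, and the system reduces to a finite system of ODEs with a unique global non-negative solution. *)

theory Defs
  imports Complex_Main
begin

end

theory Submission
  imports Defs "HOL-Analysis.Analysis"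
begin

lemma mono_deriv:
  fixes f f' :: "real \<Rightarrow> real"
  assumes ab: "a \<le> b"
    and d: "\<And>x. x \<in> {a..b} \<Longrightarrow> (f has_real_derivative f' x) (at x within {a..b})"
    and nn: "\<And>x. x \<in> {a..b} \<Longrightarrow> f' x \<ge> 0"
  shows "f a \<le> f b"
proof (rule DERIV_nonneg_imp_increasing_open[OF ab])
  fix x assume "a < x" "x < b"
  then show "\<exists>y. DERIV f x :> y \<and> y \<ge> 0"
    using d[of x] nn[of x] at_within_Icc_at[of a x b] by auto
next
  show "continuous_on {a..b} f"
    unfolding continuous_on_eq_continuous_within using d DERIV_continuous by blast
qed

lemma mono_deriv0:
  fixes f f' :: "real \<Rightarrow> real"
  assumes "0 \<le> s" "s \<le> t"
    and d: "\<And>x. x \<ge> 0 \<Longrightarrow> (f has_real_derivative f' x) (at x within {0..})"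
    and nn: "\<And>x. x \<ge> 0 \<Longrightarrow> f' x \<ge> 0"
  shows "f s \<le> f t"
proof (rule mono_deriv[OF assms(2)])
  fix x assume x: "x \<in> {s..t}"
  then show "(f has_real_derivative f' x) (at x within {s..t})"
    using d[of x] assms(1) by (auto intro: DERIV_subset)
  show "f' x \<ge> 0" using x nn assms(1) by auto
qed

lemma p2: "(8::real) ^ k = 2 ^ (3*k)" "(4::real) ^ k = 2 ^ (2*k)"
  by (simp_all add: power_mult)

lemma pow_id1: "(8::real) ^ (2 * n + 1) * (1 / 2) ^ (2 * n + 2) / 2 = 4 ^ (2 * n)"
proof -
  have "(1/2::real) ^ (2 * n + 2) = 1 / 2 ^ (2*n+2)" by (simp add: power_divide)
  moreover have "(2::real) ^ (3*(2*n+1)) = 2 ^ (2*(2*n)) * 2 ^ (2*n+2) * 2"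
  proof -
    have "3*(2*n+1) = 2*(2*n) + (2*n+2) + 1" by simp
    then show ?thesis by (simp only: power_add) simp
  qed
  ultimately have "(8::real) ^ (2 * n + 1) * (1 / 2) ^ (2 * n + 2) / 2 = 2 ^ (2*(2*n)) * 2 ^ (2*n+2) * 2 / 2 ^ (2*n+2) / 2"
    by (simp only: p2) simp
  also have "\<dots> = 4 ^ (2 * n)" by (simp add: p2)
  finally show ?thesis .
qed

lemma pow_id2: "(8::real) ^ (2 * n) * (1 / 2) ^ (2 * n + 1) = 4 ^ (2 * n) / 2"
proof -
  have "(1/2::real) ^ (2 * n + 1) = 1 / 2 ^ (2*n+1)" by (simp add: power_divide)
  moreover have "(2::real) ^ (3*(2*n)) = 2 ^ (2*(2*n)) * 2 ^ (2*n+1) / 2"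
  proof -
    have "3*(2*n) + 1 = 2*(2*n) + (2*n+1)" by simp
    then have "(2::real) ^ (3*(2*n)) * 2 = 2 ^ (2*(2*n)) * 2 ^ (2*n+1)" by (metis power_add power_Suc2 Suc_eq_plus1)
    then show ?thesis by simp
  qed
  ultimately show ?thesis by (simp add: p2)
qed

lemma dexp: "(f has_real_derivative D) (at x within S) \<Longrightarrow>
  ((\<lambda>x. exp (f x)) has_real_derivative exp (f x) * D) (at x within S)"
  by (rule DERIV_chain2[OF DERIV_exp])

locale sys =
  fixes N :: nat and m :: "nat \<Rightarrow> real \<Rightarrow> real"
  assumes ode: "\<And>n t. n \<ge> 1 \<Longrightarrow> t \<ge> 0 \<Longrightarrow>
              (m n has_real_derivative (- (8 ^ n) * m n t * m (Suc n) t)) (at t within {0..})"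
    and init: "\<And>n. n \<ge> 1 \<Longrightarrow> m n 0 = (if n \<le> 2 * N then (1 / 2) ^ n else 0)"
begin

lemma cont: "n \<ge> 1 \<Longrightarrow> continuous_on {0..} (m n)"
  unfolding continuous_on_eq_continuous_within using ode DERIV_continuous by fastforce

lemma repr:
  assumes n: "n \<ge> 1" and t: "t \<ge> 0"
  shows "m n t = m n 0 * exp (-(8^n) * integral {0..t} (m (Suc n)))"
proof -
  define A where "A s = integral {0..s} (m (Suc n))" for s
  define g where "g s = m n s * exp (8^n * A s)" for s
  have cA: "continuous_on {0..t} (m (Suc n))"
    using cont[of "Suc n"] by (rule continuous_on_subset) auto
  have dg: "(g has_real_derivative 0) (at s within {0..t})" if s: "s \<in> {0..t}" for s
  proof -
    have dA: "(A has_real_derivative m (Suc n) s) (at s within {0..t})"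
      unfolding A_def by (rule integral_has_real_derivative[OF cA s])
    have dm: "(m n has_real_derivative (- (8 ^ n) * m n s * m (Suc n) s)) (at s within {0..t})"
      using ode[OF n, of s] s by (auto intro: DERIV_subset)
    have "(g has_real_derivative (- (8 ^ n) * m n s * m (Suc n) s) * exp (8^n * A s)
        + (exp (8^n * A s) * (8^n * m (Suc n) s)) * m n s) (at s within {0..t})"
      unfolding g_def
      by (rule DERIV_mult[OF dm dexp[OF DERIV_cmult[OF dA]]])
    then show ?thesis by (simp add: algebra_simps)
  qed
  have dg': "((\<lambda>s. - g s) has_real_derivative 0) (at s within {0..t})" if "s \<in> {0..t}" for s
    using DERIV_minus[OF dg[OF that]] by simp
  have "g 0 \<le> g t"
    by (rule mono_deriv[where f=g and f'="\<lambda>_. 0", OF t dg]) auto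
  moreover have "- g 0 \<le> - g t"
    by (rule mono_deriv[where f="\<lambda>s. - g s" and f'="\<lambda>_. 0", OF t dg']) auto
  ultimately have "g t = g 0" by simp
  moreover have "A 0 = 0" unfolding A_def by simp
  ultimately have "m n t * exp (8^n * A t) = m n 0" unfolding g_def by simp
  then have "m n t = m n 0 / exp (8^n * A t)" by (simp add: field_simps)
  then show ?thesis unfolding A_def by (simp add: exp_minus field_simps)
qed

lemma nonneg: "n \<ge> 1 \<Longrightarrow> t \<ge> 0 \<Longrightarrow> m n t \<ge> 0"
  using repr[of n t] init[of n] by simp

lemma zero: "n > 2 * N \<Longrightarrow> t \<ge> 0 \<Longrightarrow> m n t = 0"
  using repr[of n t] init[of n] by simp

lemma odd_step:
  assumes E: "\<forall>t\<ge>0. m (2*n+2) t \<ge> m (2*n+2) 0 / 2" and t: "t \<ge> 0"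
  shows "m (2*n+1) t \<le> m (2*n+1) 0 * exp (- (4 ^ (2 * n)) * t)"
proof -
  define c :: real where "c = 4 ^ (2*n)"
  define g where "g s = - (m (2*n+1) s * exp (c * s))" for s
  define D where "D s = exp (c * s) * m (2*n+1) s * (8 ^ (2*n+1) * m (Suc (2*n+1)) s - c)" for s
  have dg: "(g has_real_derivative D s) (at s within {0..})" if s: "s \<ge> 0" for s
  proof -
    have dm: "(m (2*n+1) has_real_derivative (- (8 ^ (2*n+1)) * m (2*n+1) s * m (Suc (2*n+1)) s)) (at s within {0..})"
      using ode[of "2*n+1" s] s by simp
    show ?thesis unfolding g_def
      by (rule DERIV_cong[OF DERIV_minus[OF DERIV_mult[OF dm dexp[OF DERIV_cmult[OF DERIV_ident]]]]])
        (simp add: D_def algebra_simps)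
  qed
  have nn: "D s \<ge> 0" if s: "s \<ge> 0" for s
  proof (cases "m (2*n+1) 0 = 0")
    case True
    then have "m (2*n+1) s = 0" using repr[of "2*n+1" s] s by simp
    then show ?thesis unfolding D_def by simp
  next
    case False
    then have "2*n+1 \<le> 2*N" using init[of "2*n+1"] by (auto split: if_splits)
    then have "2*n+2 \<le> 2*N" by presburger
    then have m0: "m (2*n+2) 0 = (1/2)^(2*n+2)" using init[of "2*n+2"] by simp
    have "8 ^ (2*n+1) * m (2*n+2) s \<ge> 8 ^ (2*n+1) * ((1/2)^(2*n+2) / 2)"
      using E s m0 by (intro mult_left_mono) auto
    also have "8 ^ (2*n+1) * ((1/2)^(2*n+2) / 2) = c" unfolding c_def using pow_id1[of n] by simp
    finally have h: "c - 8 ^ (2*n+1) * m (2*n+2) s \<le> 0" by simp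
    have "0 \<le> exp (c * s) * m (2*n+1) s * (8 ^ (2*n+1) * m (2*n+2) s - c)"
      using nonneg[of "2*n+1" s] s h by (intro mult_nonneg_nonneg) auto
    then show ?thesis unfolding D_def by (simp add: algebra_simps)
  qed
  have "g 0 \<le> g t" by (rule mono_deriv0[where f=g and f'=D, OF order_refl t dg nn])
  then have "m (2*n+1) t * exp (c * t) \<le> m (2*n+1) 0" unfolding g_def by simp
  then have "m (2*n+1) t \<le> m (2*n+1) 0 / exp (c * t)" by (simp add: field_simps)
  then show ?thesis unfolding c_def by (simp add: exp_minus field_simps)
qed

lemma even_step:
  assumes n: "n \<ge> 1"
    and O: "\<forall>t\<ge>0. m (2*n+1) t \<le> m (2*n+1) 0 * exp (- (4 ^ (2 * n)) * t)" and t: "t \<ge> 0"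
  shows "m (2*n) t \<ge> m (2*n) 0 / 2"
proof -
  define c :: real where "c = 4 ^ (2*n)"
  define h where "h s = m (2*n) s * exp ((1/2) * (1 - exp (- c * s)))" for s
  have n1: "2*n \<ge> 1" using n by simp
  define D where "D s = exp ((1/2) * (1 - exp (- c * s))) * m (2*n) s * (c / 2 * exp (- c * s) - 8 ^ (2*n) * m (Suc (2*n)) s)" for s
  have dh: "(h has_real_derivative D s) (at s within {0..})" if s: "s \<ge> 0" for s
  proof -
    have dm: "(m (2*n) has_real_derivative (- (8 ^ (2*n)) * m (2*n) s * m (Suc (2*n)) s)) (at s within {0..})"
      using ode[OF n1, of s] s by simp
    show ?thesis unfolding h_def
      by (rule DERIV_cong[OF DERIV_mult[OF dm dexp[OF DERIV_cmult[OF DERIV_diff[OF DERIV_const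
           dexp[OF DERIV_cmult[OF DERIV_ident]]]]]]])
        (simp add: D_def algebra_simps)
  qed
  have nn: "D s \<ge> 0" if s: "s \<ge> 0" for s
  proof -
    have m0: "m (2*n+1) 0 \<le> (1/2)^(2*n+1)" using init[of "2*n+1"] by simp
    have "8 ^ (2*n) * m (2*n+1) s \<le> 8 ^ (2*n) * (m (2*n+1) 0 * exp (- c * s))"
      using O s unfolding c_def by (intro mult_left_mono) auto
    also have "\<dots> \<le> 8 ^ (2*n) * ((1/2)^(2*n+1) * exp (- c * s))"
      using m0 by (intro mult_left_mono mult_right_mono) auto
    also have "\<dots> = c / 2 * exp (- c * s)" unfolding c_def using pow_id2[of n] by simp
    finally have h: "0 \<le> c / 2 * exp (- c * s) - 8 ^ (2*n) * m (2*n+1) s" by simp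
    have "0 \<le> exp ((1/2) * (1 - exp (- c * s))) * m (2*n) s * (c / 2 * exp (- c * s) - 8 ^ (2*n) * m (2*n+1) s)"
      using nonneg[OF n1 s] h by (intro mult_nonneg_nonneg) auto
    then show ?thesis unfolding D_def by (simp add: algebra_simps)
  qed
  have "h 0 \<le> h t" by (rule mono_deriv0[where f=h and f'=D, OF order_refl t dh nn])
  then have a: "m (2*n) 0 \<le> m (2*n) t * exp ((1/2) * (1 - exp (- c * t)))" unfolding h_def by simp
  have "exp ((1/2) * (1 - exp (- c * t))) \<le> exp (1/2)" by simp
  also have "\<dots> \<le> 2" by (rule exp_half_le2)
  finally have "m (2*n) t * exp ((1/2) * (1 - exp (- c * t))) \<le> m (2*n) t * 2"
    using nonneg[OF n1 t] by (intro mult_left_mono) auto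
  with a show ?thesis by simp
qed

end

theorem proposition3p1:
  fixes N :: nat and m :: "nat \<Rightarrow> real \<Rightarrow> real"
  assumes N: "N \<ge> 1"
    and ode: "\<And>n t. n \<ge> 1 \<Longrightarrow> t \<ge> 0 \<Longrightarrow>
              (m n has_real_derivative (- (8 ^ n) * m n t * m (Suc n) t)) (at t within {0..})"
    and init: "\<And>n. n \<ge> 1 \<Longrightarrow> m n 0 = (if n \<le> 2 * N then (1 / 2) ^ n else 0)"
  shows "\<forall>t\<ge>0. (\<forall>n\<ge>1. m (2 * n) t \<ge> m (2 * n) 0 / 2) \<and>
                 (\<forall>n. m (2 * n + 1) t \<le> m (2 * n + 1) 0 * exp (- (4 ^ (2 * n)) * t))"
proof -
  interpret sys N m using ode init by unfold_locales auto
  have E: "n \<ge> 1 \<longrightarrow> (\<forall>t\<ge>0. m (2*n) t \<ge> m (2*n) 0 / 2)" if "n \<le> N+1" for n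
    using that
  proof (induction n rule: inc_induct)
    case base
    show ?case using zero[of "2*(N+1)"] by simp
  next
    case (step k)
    have "\<forall>t\<ge>0. m (2*k+2) t \<ge> m (2*k+2) 0 / 2" using step.IH by simp
    then have "\<forall>t\<ge>0. m (2*k+1) t \<le> m (2*k+1) 0 * exp (- (4 ^ (2 * k)) * t)"
      using odd_step by blast
    then show ?case using even_step by blast
  qed
  have E': "\<forall>t\<ge>0. m (2*n) t \<ge> m (2*n) 0 / 2" if "n \<ge> 1" for n
  proof (cases "n \<le> N+1")
    case True then show ?thesis using E that by blast
  next
    case False then show ?thesis using zero[of "2*n"] by simp
  qed
  have O: "\<forall>t\<ge>0. m (2*n+1) t \<le> m (2*n+1) 0 * exp (- (4 ^ (2 * n)) * t)" for n
    using odd_step E'[of "Suc n"] by simp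
  show ?thesis using E' O by blast
qed

end
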